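(* Every word-representable graph $G=(V,E)$ admits a border-free word representing it, i.e. a word $w$ representing $G$ that cannot be written as $w=uvu$ with $u$ non-empty.
   Context: A graph $G=(V,E)$ is word-representable if there is a word $w$ over the alphabet $V$, containing every letter of $V$, such that for all distinct $x,y\in V$, the letters $x$ and $y$ alternate in $w$ (i.e. deleting all letters other than $x,y$ from $w$ yields a word of the form $xyxy\cdots$ or $yxyx\cdots$, of even or odd length) if and only if $xy\in E$; such $w$ is said to represent $G$. A word $w$ is bordered if $w=uvu$ for some words $u,v$ with $u$ non-empty; otherwise it is border-free. *)

theory Defs
  imports Main
begin

definition alternate :: "'a list \<Rightarrow> 'a \<Rightarrow> 'a \<Rightarrow> bool" where
  "alternate w x y \<longleftrightarrow>
     (let u = filter (\<lambda>z. z = x \<or> z = y) w in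
        \<forall>i. Suc i < length u \<longrightarrow> u ! i \<noteq> u ! Suc i)"

definition represents :: "'a list \<Rightarrow> 'a set \<Rightarrow> ('a \<Rightarrow> 'a \<Rightarrow> bool) \<Rightarrow> bool" where
  "represents w V E \<longleftrightarrow> set w = V \<and>
     (\<forall>x\<in>V. \<forall>y\<in>V. x \<noteq> y \<longrightarrow> (alternate w x y \<longleftrightarrow> E x y))"

definition word_representable :: "'a set \<Rightarrow> ('a \<Rightarrow> 'a \<Rightarrow> bool) \<Rightarrow> bool" where
  "word_representable V E \<longleftrightarrow> (\<exists>w. represents w V E)"

definition bordered :: "'a list \<Rightarrow> bool" where
  "bordered w \<longleftrightarrow> (\<exists>u v. u \<noteq> [] \<and> w = u @ v @ u)"

end

theory Submission
  imports Defs "HOL-Library.List_Lexorder"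
begin



fun noadj :: "'a list \<Rightarrow> bool" where
  "noadj (a#b#u) = (a \<noteq> b \<and> noadj (b#u))"
| "noadj _ = True"

lemma noadj_iff: "noadj u \<longleftrightarrow> (\<forall>i. Suc i < length u \<longrightarrow> u!i \<noteq> u!Suc i)"
proof (induction u rule: noadj.induct)
  case (1 a b u)
  show ?case
  proof
    assume "noadj (a#b#u)"
    then show "\<forall>i. Suc i < length (a#b#u) \<longrightarrow> (a#b#u)!i \<noteq> (a#b#u)!Suc i"
      using 1 by (auto simp: nth_Cons split: nat.splits)
  next
    assume h: "\<forall>i. Suc i < length (a#b#u) \<longrightarrow> (a#b#u)!i \<noteq> (a#b#u)!Suc i"
    have "a \<noteq> b" using h[rule_format, of 0] by simp
    moreover have "\<forall>i. Suc i < length (b#u) \<longrightarrow> (b#u)!i \<noteq> (b#u)!Suc i"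
    proof (intro allI impI)
      fix i assume "Suc i < length (b#u)"
      then show "(b#u)!i \<noteq> (b#u)!Suc i" using h[rule_format, of "Suc i"] by simp
    qed
    ultimately show "noadj (a#b#u)" using 1 by simp
  qed
qed auto

lemma noadj_Cons: "noadj (a#u) \<longleftrightarrow> (u = [] \<or> (hd u \<noteq> a \<and> noadj u))"
  by (cases u) auto

lemma noadj_append: "noadj (xs@ys) \<longleftrightarrow> noadj xs \<and> noadj ys \<and> (xs \<noteq> [] \<and> ys \<noteq> [] \<longrightarrow> last xs \<noteq> hd ys)"
proof (induction xs)
  case Nil thus ?case by simp
next
  case (Cons a xs)
  show ?case
  proof (cases xs)
    case Nil thus ?thesis by (cases ys) auto
  next
    case (Cons b xs') thus ?thesis using Cons.IH by auto
  qed
qed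

fun alt :: "'a \<Rightarrow> 'a \<Rightarrow> nat \<Rightarrow> 'a list" where
  "alt a b 0 = []"
| "alt a b (Suc n) = a # alt b a n"

lemma alt_char:
  assumes "x \<noteq> y" shows "set u \<subseteq> {x,y} \<Longrightarrow> noadj u \<Longrightarrow> \<exists>n. u = alt x y n \<or> u = alt y x n"
proof (induction u)
  case Nil show ?case by (intro exI[of _ 0]) simp
next
  case (Cons a u)
  have "set u \<subseteq> {x,y}" "noadj u" using Cons.prems by (auto simp: noadj_Cons)
  then obtain n where n: "u = alt x y n \<or> u = alt y x n" using Cons.IH by blast
  show ?case
  proof (cases n)
    case 0
    then have u0: "u = []" using n by auto
    have "a = x \<or> a = y" using Cons.prems by auto
    then show ?thesis
    proof
      assume "a = x" then show ?thesis using u0 by (intro exI[of _ 1]) simp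
    next
      assume "a = y" then show ?thesis using u0 by (intro exI[of _ 1]) simp
    qed
  next
    case (Suc m)
    show ?thesis
    proof (cases "u = alt x y n")
      case True
      then have "a = y" using Cons.prems Suc by (auto simp: noadj_Cons)
      thus ?thesis using True Suc by (intro exI[of _ "Suc n"]) simp
    next
      case False
      then have u: "u = alt y x n" using n by auto
      then have "a = x" using Cons.prems Suc by (auto simp: noadj_Cons)
      thus ?thesis using u Suc by (intro exI[of _ "Suc n"]) simp
    qed
  qed
qed

lemma alt_count: "a \<noteq> b \<Longrightarrow> count_list (alt a b n) a = (n+1) div 2 \<and> count_list (alt a b n) b = n div 2"
  by (induction n arbitrary: a b) auto

lemma alt_last: "n \<ge> 1 \<Longrightarrow> last (alt a b n) = (if odd n then a else b)"
proof (induction n arbitrary: a b)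
  case 0 thus ?case by simp
next
  case (Suc n) thus ?case by (cases n) auto
qed

lemma alt_hd: "n \<ge> 1 \<Longrightarrow> hd (alt a b n) = a"
  by (cases n) auto

lemma alt_ne: "alt a b n = [] \<longleftrightarrow> n = 0"
  by (cases n) auto

lemma alt_remdups: "a \<noteq> b \<Longrightarrow> remdups (alt a b (Suc (Suc n))) = (if even n then [a,b] else [b,a])"
proof (induction n arbitrary: a b)
  case 0 thus ?case by auto
next
  case (Suc n)
  have "a \<in> set (alt b a (Suc (Suc n)))" by (cases n) auto
  then show ?case using Suc by simp
qed

lemma alt_noadj: "a \<noteq> b \<Longrightarrow> noadj (alt a b n)"
  by (induction n arbitrary: a b) (auto simp: noadj_Cons alt_hd alt_ne)

lemma even_div: "(n+1) div 2 = (n::nat) div 2 \<Longrightarrow> even n" by presburger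
lemma odd_div: "(n+1) div 2 < (n::nat) div 2 \<Longrightarrow> False" by presburger

lemma EQ1:
  assumes "a \<noteq> b" "count_list (alt a b n) a = count_list (alt a b n) b" "alt a b n \<noteq> []"
  shows "hd (alt a b n) \<noteq> last (alt a b n)"
proof -
  have ca: "count_list (alt a b n) a = (n+1) div 2" and cb: "count_list (alt a b n) b = n div 2"
    using alt_count[OF assms(1), of n] by auto
  have "(n+1) div 2 = n div 2" using assms(2) unfolding ca cb .
  then have ev: "even n" by (rule even_div)
  have n1: "n \<ge> 1" using assms(3) alt_ne[of a b n] by auto
  have h: "hd (alt a b n) = a" by (rule alt_hd[OF n1])
  have l: "last (alt a b n) = b" using alt_last[OF n1, of a b] ev by auto
  show ?thesis unfolding h l by (rule assms(1))
qed

lemma EQ: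
  assumes "x \<noteq> y" "set u \<subseteq> {x,y}" "noadj u" "count_list u x = count_list u y" "u \<noteq> []"
  shows "hd u \<noteq> last u"
proof -
  obtain n where n: "u = alt x y n \<or> u = alt y x n" using alt_char[OF assms(1) assms(2) assms(3)] by blast
  then show ?thesis
  proof
    assume u: "u = alt x y n"
    show ?thesis using EQ1[OF assms(1), of n] assms(4,5) unfolding u by blast
  next
    assume u: "u = alt y x n"
    have "y \<noteq> x" using assms(1) by blast
    show ?thesis using EQ1[OF \<open>y \<noteq> x\<close>, of n] assms(4,5) unfolding u by metis
  qed
qed

lemma GT1:
  assumes "a \<noteq> b" "count_list (alt a b n) b < count_list (alt a b n) a"
  shows "alt a b n \<noteq> [] \<and> last (alt a b n) = a"
proof -
  have ca: "count_list (alt a b n) a = (n+1) div 2" and cb: "count_list (alt a b n) b = n div 2"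
    using alt_count[OF assms(1), of n] by auto
  have "n div 2 < (n+1) div 2" using assms(2) unfolding ca cb .
  then have od: "odd n" by presburger
  then have n1: "n \<ge> 1" by (cases n) auto
  have "alt a b n \<noteq> []" using n1 alt_ne[of a b n] by auto
  moreover have "last (alt a b n) = a" using alt_last[OF n1, of a b] od by auto
  ultimately show ?thesis by blast
qed

lemma GT0:
  assumes "a \<noteq> b" "count_list (alt a b n) a < count_list (alt a b n) b"
  shows False
proof -
  have ca: "count_list (alt a b n) a = (n+1) div 2" and cb: "count_list (alt a b n) b = n div 2"
    using alt_count[OF assms(1), of n] by auto
  have "(n+1) div 2 < n div 2" using assms(2) unfolding ca cb .
  then show False by (rule odd_div)
qed

lemma GT:
  assumes "x \<noteq> y" "set u \<subseteq> {x,y}" "noadj u" "count_list u x < count_list u y"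
  shows "u \<noteq> [] \<and> last u = y"
proof -
  obtain n where n: "u = alt x y n \<or> u = alt y x n" using alt_char[OF assms(1) assms(2) assms(3)] by blast
  then show ?thesis
  proof
    assume u: "u = alt x y n"
    show ?thesis using GT0[OF assms(1), of n] assms(4) unfolding u by blast
  next
    assume u: "u = alt y x n"
    have "y \<noteq> x" using assms(1) by blast
    show ?thesis using GT1[OF \<open>y \<noteq> x\<close>, of n] assms(4) unfolding u by blast
  qed
qed




abbreviation F where "F x y w \<equiv> filter (\<lambda>z. z = x \<or> z = y) w"

lemma alternate_noadj: "alternate w x y \<longleftrightarrow> noadj (F x y w)"
  by (simp add: alternate_def noadj_iff Let_def)

definition uniform :: "'a list \<Rightarrow> bool" where
  "uniform w \<longleftrightarrow> (\<forall>x\<in>set w. \<forall>y\<in>set w. count_list w x = count_list w y)"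

lemma count_filter: "P x \<Longrightarrow> count_list (filter P w) x = count_list w x"
  by (induction w) auto

lemma count_distinct: "distinct xs \<Longrightarrow> count_list xs x = (if x \<in> set xs then 1 else 0)"
  by (induction xs) auto

lemma alt_remdups_ok:
  assumes "a \<noteq> b" shows "noadj (alt a b (Suc (Suc m)) @ remdups (alt a b (Suc (Suc m))))"
proof -
  have l: "last (alt a b (Suc (Suc m))) = (if odd m then a else b)" using alt_last[of "Suc (Suc m)" a b] by simp
  define A where "A = alt a b (Suc (Suc m))"
  have nA: "noadj A" "A \<noteq> []" using alt_noadj[OF assms] A_def apply blast by (simp add: A_def)
  show ?thesis
  proof (cases "even m")
    case True
    then have "remdups A = [a,b]" "last A = b" using alt_remdups[OF assms, of m] l unfolding A_def by auto
    then show ?thesis using nA assms unfolding A_def[symmetric] noadj_append by simp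
  next
    case False
    then have "remdups A = [b,a]" "last A = a" using alt_remdups[OF assms, of m] l unfolding A_def by auto
    then show ?thesis using nA assms unfolding A_def[symmetric] noadj_append by simp
  qed
qed

lemma step_alt:
  assumes K: "\<forall>z\<in>set w. count_list w z \<le> K" and xy: "x \<in> set w" "y \<in> set w" "x \<noteq> y"
  shows "alternate (w @ remdups (filter (\<lambda>z. count_list w z < K) w)) x y \<longleftrightarrow> alternate w x y"
proof -
  define L where "L = F x y w"
  have sL: "set L \<subseteq> {x,y}" unfolding L_def by auto
  have cLx: "count_list L x = count_list w x" and cLy: "count_list L y = count_list w y"
    unfolding L_def by (auto intro: count_filter)
  have inL: "x \<in> set L" "y \<in> set L" using xy unfolding L_def by auto
  have eq: "F x y (remdups (filter (\<lambda>z. count_list w z < K) w))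
      = remdups (filter (\<lambda>z. (z = x \<or> z = y) \<and> count_list w z < K) w)"
    by (simp add: remdups_filter[symmetric] conj_commute)
  have gen: "alternate (w @ remdups (filter (\<lambda>z. count_list w z < K) w)) x y \<longleftrightarrow>
     noadj (L @ remdups (filter (\<lambda>z. (z = x \<or> z = y) \<and> count_list w z < K) w))"
    unfolding alternate_noadj L_def filter_append eq ..
  consider (nn) "\<not> count_list w x < K" "\<not> count_list w y < K"
    | (yn) "count_list w x < K" "\<not> count_list w y < K"
    | (ny) "\<not> count_list w x < K" "count_list w y < K"
    | (yy) "count_list w x < K" "count_list w y < K" by blast
  then show ?thesis
  proof cases
    case nn
    have "filter (\<lambda>z. (z = x \<or> z = y) \<and> count_list w z < K) w = []"
      using nn by (auto simp: filter_empty_conv)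
    then show ?thesis using gen by (simp add: alternate_noadj L_def)
  next
    case yn
    have "filter (\<lambda>z. (z = x \<or> z = y) \<and> count_list w z < K) w = filter (\<lambda>z. z = x) w"
      using yn by (metis (mono_tags, lifting) filter_cong)
    moreover have "remdups (filter (\<lambda>z. z = x) w) = [x]"
      using xy(1) by (induction w) (auto simp: filter_empty_conv)
    ultimately have g: "alternate (w @ remdups (filter (\<lambda>z. count_list w z < K) w)) x y \<longleftrightarrow> noadj (L @ [x])"
      using gen by simp
    have "noadj L \<Longrightarrow> L \<noteq> [] \<and> last L = y"
      using GT[OF xy(3) sL] cLx cLy yn K xy by fastforce
    then show ?thesis using g xy(3) by (auto simp: noadj_append alternate_noadj L_def)
  next
    case ny
    have "filter (\<lambda>z. (z = x \<or> z = y) \<and> count_list w z < K) w = filter (\<lambda>z. z = y) w"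
      using ny by (metis (mono_tags, lifting) filter_cong)
    moreover have "remdups (filter (\<lambda>z. z = y) w) = [y]"
      using xy(2) by (induction w) (auto simp: filter_empty_conv)
    ultimately have g: "alternate (w @ remdups (filter (\<lambda>z. count_list w z < K) w)) x y \<longleftrightarrow> noadj (L @ [y])"
      using gen by simp
    have sL': "set L \<subseteq> {y,x}" using sL by auto
    have "noadj L \<Longrightarrow> L \<noteq> [] \<and> last L = x"
      using GT[OF xy(3)[symmetric] sL'] cLx cLy ny K xy by fastforce
    then show ?thesis using g xy(3) by (auto simp: noadj_append alternate_noadj L_def)
  next
    case yy
    have "filter (\<lambda>z. (z = x \<or> z = y) \<and> count_list w z < K) w = L"
      unfolding L_def using yy by (metis (mono_tags, lifting) filter_cong)
    then have g: "alternate (w @ remdups (filter (\<lambda>z. count_list w z < K) w)) x y \<longleftrightarrow> noadj (L @ remdups L)"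
      using gen by simp
    have "noadj L \<Longrightarrow> noadj (L @ remdups L)"
    proof -
      assume "noadj L"
      then obtain n where n: "L = alt x y n \<or> L = alt y x n" using alt_char[OF xy(3) sL] by blast
      have "n \<ge> 2"
      proof (rule ccontr)
        assume "\<not> n \<ge> 2"
        then have "n = 0 \<or> n = 1" by auto
        then show False using n inL xy(3) by auto
      qed
      then obtain m where "n = Suc (Suc m)" by (metis add_2_eq_Suc le_Suc_ex)
      then show ?thesis using n alt_remdups_ok xy(3) by metis
    qed
    then show ?thesis using g by (auto simp: noadj_append alternate_noadj L_def)
  qed
qed




lemma uniformize:
  assumes "represents w0 V E" shows "\<exists>w'. represents w' V E \<and> uniform w'"
proof -
  have V: "V = set w0" using assms by (simp add: represents_def)
  define K where "K = Max (count_list w0 ` V)"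
  have K0: "\<forall>z\<in>V. count_list w0 z \<le> K" unfolding K_def V by simp
  have main: "\<And>n w. represents w V E \<Longrightarrow> (\<forall>z\<in>V. count_list w z \<le> K) \<Longrightarrow>
      (\<Sum>z\<in>V. K - count_list w z) = n \<Longrightarrow> \<exists>w'. represents w' V E \<and> uniform w'"
  proof -
    fix n
    show "\<And>w. represents w V E \<Longrightarrow> (\<forall>z\<in>V. count_list w z \<le> K) \<Longrightarrow>
      (\<Sum>z\<in>V. K - count_list w z) = n \<Longrightarrow> \<exists>w'. represents w' V E \<and> uniform w'"
    proof (induction n rule: less_induct)
      case (less n w)
      have Vw: "V = set w" using less.prems by (simp add: represents_def)
      show ?case
      proof (cases "\<forall>z\<in>V. count_list w z = K")
        case True
        then have "uniform w" unfolding uniform_def Vw by simp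
        then show ?thesis using less.prems by blast
      next
        case False
        define \<sigma> where "\<sigma> = remdups (filter (\<lambda>z. count_list w z < K) w)"
        have s\<sigma>: "set \<sigma> = {z\<in>set w. count_list w z < K}" unfolding \<sigma>_def by auto
        have sw: "set (w @ \<sigma>) = V" using s\<sigma> Vw by auto
        have d\<sigma>: "distinct \<sigma>" unfolding \<sigma>_def by simp
        have cnt: "count_list (w@\<sigma>) z = count_list w z + (if count_list w z < K then 1 else 0)" if "z \<in> V" for z
        proof -
          have "count_list \<sigma> z = (if z \<in> set \<sigma> then 1 else 0)" by (rule count_distinct[OF d\<sigma>])
          moreover have "z \<in> set \<sigma> \<longleftrightarrow> count_list w z < K" using s\<sigma> that Vw by blast
          ultimately show ?thesis by simp
        qed
        have rep: "represents (w@\<sigma>) V E"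
          unfolding represents_def
        proof (intro conjI ballI impI)
          show "set (w @ \<sigma>) = V" by (rule sw)
        next
          fix x y assume xy: "x \<in> V" "y \<in> V" "x \<noteq> y"
          have "alternate (w @ \<sigma>) x y \<longleftrightarrow> alternate w x y"
            unfolding \<sigma>_def using step_alt[of w K x y] less.prems(2) xy Vw by blast
          then show "alternate (w @ \<sigma>) x y = E x y" using less.prems(1) xy unfolding represents_def by auto
        qed
        have le: "\<forall>z\<in>V. count_list (w@\<sigma>) z \<le> K" using cnt less.prems(2) by auto
        have fin: "finite V" using Vw by simp
        obtain z0 where z0: "z0 \<in> V" "count_list w z0 \<noteq> K" using False by blast
        have "(\<Sum>z\<in>V. K - count_list (w@\<sigma>) z) < (\<Sum>z\<in>V. K - count_list w z)"
        proof (rule sum_strict_mono_ex1[OF fin])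
          show "\<forall>x\<in>V. K - count_list (w @ \<sigma>) x \<le> K - count_list w x" using cnt by auto
          show "\<exists>a\<in>V. K - count_list (w @ \<sigma>) a < K - count_list w a"
            using z0 cnt less.prems(2) by (intro bexI[of _ z0]) (auto simp: le_neq_implies_less)
        qed
        then have "(\<Sum>z\<in>V. K - count_list (w@\<sigma>) z) < n" using less.prems(3) by simp
        from less.IH[OF this rep le refl] show ?thesis .
      qed
    qed
  qed
  show ?thesis using main[OF assms K0 refl] .
qed




lemma F_sym: "F y x w = F x y w"
  by (induction w) auto

lemma rot_pair:
  assumes "x \<noteq> y" "set L \<subseteq> {x,y}" "y \<in> set L" "count_list (x#L) x = count_list (x#L) y"
  shows "noadj (x#L) \<longleftrightarrow> noadj (L@[x])"
proof
  assume h: "noadj (x#L)"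
  have "hd (x#L) \<noteq> last (x#L)" using EQ[OF assms(1) _ h assms(4)] assms(2) by auto
  then show "noadj (L@[x])" using h assms(3) by (auto simp: noadj_Cons noadj_append)
next
  assume h: "noadj (L@[x])"
  have c: "count_list (L@[x]) x = count_list (L@[x]) y" using assms(4) assms(1) by simp
  have "hd (L@[x]) \<noteq> last (L@[x])" using EQ[OF assms(1) _ h c] assms(2) by auto
  then show "noadj (x#L)" using h assms(3) by (auto simp: noadj_Cons noadj_append)
qed

lemma rot1:
  assumes "uniform w" "represents w V E"
  shows "uniform (rotate1 w) \<and> represents (rotate1 w) V E"
proof (cases w)
  case Nil thus ?thesis using assms by simp
next
  case (Cons a u)
  have r: "rotate1 w = u @ [a]" using Cons by simp
  have cnt: "\<And>z. count_list (u@[a]) z = count_list w z" using Cons by simp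
  have st: "set (u@[a]) = set w" using Cons by auto
  have un: "uniform (rotate1 w)" unfolding r uniform_def st cnt using assms(1) unfolding uniform_def by blast
  have V: "V = set w" using assms(2) by (simp add: represents_def)
  have alt: "alternate (u@[a]) x y \<longleftrightarrow> alternate w x y" if xy: "x \<in> V" "y \<in> V" "x \<noteq> y" for x y
  proof -
    have ce: "count_list w x = count_list w y" using assms(1) xy V unfolding uniform_def by blast
    have cx: "count_list (F x y w) x = count_list w x" by (rule count_filter) simp
    have cy: "count_list (F x y w) y = count_list w y" by (rule count_filter) simp
    have cxy: "count_list (F x y w) x = count_list (F x y w) y" using ce cx cy by simp
    have sF: "set (F x y u) \<subseteq> {x,y}" by auto
    have sF': "set (F x y u) \<subseteq> {y,x}" by auto
    consider "a = x" | "a = y" | "a \<noteq> x \<and> a \<noteq> y" by blast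
    then show ?thesis
    proof cases
      case 1
      have e1: "F x y w = x # F x y u" using Cons 1 by simp
      have e2: "F x y (u@[a]) = F x y u @ [x]" using 1 by simp
      have "y \<in> set u" using xy V Cons 1 by simp
      then have yin: "y \<in> set (F x y u)" by simp
      have c: "count_list (x # F x y u) x = count_list (x # F x y u) y" using cxy unfolding e1 .
      have "noadj (x # F x y u) \<longleftrightarrow> noadj (F x y u @ [x])" by (rule rot_pair[OF xy(3) sF yin c])
      then show ?thesis unfolding alternate_noadj e2 e1 by blast
    next
      case 2
      have e1: "F x y w = y # F x y u" using Cons 2 by simp
      have e2: "F x y (u@[a]) = F x y u @ [y]" using 2 by simp
      have "x \<in> set u" using xy V Cons 2 by simp
      then have xin: "x \<in> set (F x y u)" by simp
      have c: "count_list (y # F x y u) y = count_list (y # F x y u) x" using cxy unfolding e1 by simp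
      have yx: "y \<noteq> x" using xy(3) by blast
      have "noadj (y # F x y u) \<longleftrightarrow> noadj (F x y u @ [y])" by (rule rot_pair[OF yx sF' xin c])
      then show ?thesis unfolding alternate_noadj e2 e1 by blast
    next
      case 3
      have "F x y (u@[a]) = F x y w" using 3 Cons by simp
      then show ?thesis unfolding alternate_noadj by simp
    qed
  qed
  have "represents (rotate1 w) V E"
    unfolding represents_def r
  proof (intro conjI ballI impI)
    show "set (u @ [a]) = V" using st V by simp
  next
    fix x y assume xy: "x \<in> V" "y \<in> V" "x \<noteq> y"
    have "alternate w x y = E x y" using assms(2) xy unfolding represents_def by blast
    then show "alternate (u @ [a]) x y = E x y" using alt[OF xy] by blast
  qed
  then show ?thesis using un by blast
qed

lemma rotn: "uniform w \<Longrightarrow> represents w V E \<Longrightarrow> uniform (rotate n w) \<and> represents (rotate n w) V E"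
proof (induction n)
  case 0 thus ?case by simp
next
  case (Suc n)
  then have "uniform (rotate n w) \<and> represents (rotate n w) V E" by blast
  then have "uniform (rotate1 (rotate n w)) \<and> represents (rotate1 (rotate n w)) V E" using rot1 by blast
  then show ?case by (simp add: rotate_Suc)
qed

definition pw :: "'a list \<Rightarrow> nat \<Rightarrow> 'a list" where "pw z m = concat (replicate m z)"

lemma pw_Suc: "pw z (Suc m) = z @ pw z m" by (simp add: pw_def)
lemma pw_0: "pw z 0 = []" by (simp add: pw_def)
lemma pw_add: "pw z (i+j) = pw z i @ pw z j" by (induction i) (auto simp: pw_def)
lemma pw_len: "length (pw z m) = m * length z" by (induction m) (auto simp: pw_def)
lemma pw_set: "m \<ge> 1 \<Longrightarrow> set (pw z m) = set z" by (cases m) (auto simp: pw_def)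
lemma pw_count: "count_list (pw z m) x = m * count_list z x" by (induction m) (auto simp: pw_def)
lemma pw_filter: "filter P (pw z m) = pw (filter P z) m" by (induction m) (auto simp: pw_def)

lemma pw_hd: "L \<noteq> [] \<Longrightarrow> pw L m \<noteq> [] \<Longrightarrow> hd (pw L m) = hd L"
proof -
  assume "L \<noteq> []" "pw L m \<noteq> []"
  then obtain k where "m = Suc k" by (cases m) (auto simp: pw_0)
  then have "pw L m = L @ pw L k" by (simp add: pw_Suc)
  then show ?thesis using \<open>L \<noteq> []\<close> by simp
qed

lemma pw_noadj: "noadj L \<Longrightarrow> (L \<noteq> [] \<Longrightarrow> hd L \<noteq> last L) \<Longrightarrow> noadj (pw L m)"
proof (induction m)
  case 0 thus ?case by (simp add: pw_0)
next
  case (Suc m)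
  have IH: "noadj (pw L m)" using Suc by blast
  have j: "L \<noteq> [] \<and> pw L m \<noteq> [] \<longrightarrow> last L \<noteq> hd (pw L m)"
  proof
    assume h: "L \<noteq> [] \<and> pw L m \<noteq> []"
    then have "hd (pw L m) = hd L" using pw_hd by blast
    then show "last L \<noteq> hd (pw L m)" using Suc.prems(2) h by metis
  qed
  have "noadj (L @ pw L m)" unfolding noadj_append using Suc.prems(1) IH j by blast
  then show ?case by (simp add: pw_Suc)
qed

lemma pw_noadj_D: "m \<ge> 1 \<Longrightarrow> noadj (pw L m) \<Longrightarrow> noadj L"
proof -
  assume "m \<ge> 1" "noadj (pw L m)"
  then obtain k where "m = Suc k" by (cases m) auto
  then have "pw L m = L @ pw L k" by (simp add: pw_Suc)
  then have "noadj (L @ pw L k)" using \<open>noadj (pw L m)\<close> by simp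
  then show "noadj L" unfolding noadj_append by blast
qed

lemma pw_rep:
  assumes "m \<ge> 1" "uniform (pw z m)" "represents (pw z m) V E"
  shows "uniform z \<and> represents z V E"
proof -
  have st: "set (pw z m) = set z" using pw_set assms(1) .
  have un: "uniform z" unfolding uniform_def
  proof (intro ballI)
    fix x y assume "x \<in> set z" "y \<in> set z"
    then have "m * count_list z x = m * count_list z y"
      using assms(2) unfolding uniform_def st pw_count by blast
    then show "count_list z x = count_list z y" using assms(1) by simp
  qed
  have V: "V = set z" using assms(3) st unfolding represents_def by simp
  have alt: "alternate (pw z m) x y \<longleftrightarrow> alternate z x y" if xy: "x \<in> V" "y \<in> V" "x \<noteq> y" for x y
  proof -
    have cx: "count_list (F x y z) x = count_list z x" by (rule count_filter) simp
    have cy: "count_list (F x y z) y = count_list z y" by (rule count_filter) simp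
    have "count_list z x = count_list z y" using un xy V unfolding uniform_def by blast
    then have ce: "count_list (F x y z) x = count_list (F x y z) y" unfolding cx cy .
    have sF: "set (F x y z) \<subseteq> {x,y}" by auto
    have i1: "noadj (F x y z) \<Longrightarrow> noadj (pw (F x y z) m)"
    proof -
      assume h: "noadj (F x y z)"
      show "noadj (pw (F x y z) m)"
      proof (rule pw_noadj[OF h])
        assume "F x y z \<noteq> []"
        then show "hd (F x y z) \<noteq> last (F x y z)" using EQ[OF xy(3) sF h ce] by blast
      qed
    qed
    have i2: "noadj (pw (F x y z) m) \<Longrightarrow> noadj (F x y z)" by (rule pw_noadj_D[OF assms(1)])
    show ?thesis unfolding alternate_noadj pw_filter using i1 i2 by blast
  qed
  have "represents z V E" unfolding represents_def
  proof (intro conjI ballI impI)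
    show "set z = V" using V by simp
  next
    fix x y assume xy: "x \<in> V" "y \<in> V" "x \<noteq> y"
    have "alternate (pw z m) x y = E x y" using assms(3) xy unfolding represents_def by blast
    then show "alternate z x y = E x y" using alt[OF xy] by blast
  qed
  then show ?thesis using un by blast
qed

lemma root: "u @ v = v @ u \<Longrightarrow> \<exists>z i j. u = pw z i \<and> v = pw z j"
proof (induction "length u + length v" arbitrary: u v rule: less_induct)
  case less
  show ?case
  proof (cases "u = [] \<or> v = []")
    case True
    then show ?thesis
    proof
      assume "u = []" then show ?thesis by (intro exI[of _ v] exI[of _ 0] exI[of _ 1]) (simp add: pw_def)
    next
      assume "v = []" then show ?thesis by (intro exI[of _ u] exI[of _ 1] exI[of _ 0]) (simp add: pw_def)
    qed
  next
    case False
    show ?thesis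
    proof (cases "length u \<le> length v")
      case True
      define v' where "v' = drop (length u) v"
      have "take (length u) (u@v) = take (length u) (v@u)" using less.prems by simp
      then have "take (length u) v = u" using True by simp
      then have v: "v = u @ v'" unfolding v'_def by (metis append_take_drop_id)
      have "u @ v' = v' @ u" using less.prems unfolding v by simp
      moreover have "length u + length v' < length u + length v" using v False by auto
      ultimately obtain z i j where "u = pw z i" "v' = pw z j" using less.hyps by blast
      then show ?thesis using v by (intro exI[of _ z] exI[of _ i] exI[of _ "i+j"]) (simp add: pw_add)
    next
      case False2: False
      define u' where "u' = drop (length v) u"
      have "take (length v) (u@v) = take (length v) (v@u)" using less.prems by simp
      then have "take (length v) u = v" using False2 by simp
      then have u: "u = v @ u'" unfolding u'_def by (metis append_take_drop_id)
      have "u' @ v = v @ u'" using less.prems unfolding u by simp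
      moreover have "length u' + length v < length u + length v" using u False by auto
      ultimately obtain z i j where "u' = pw z i" "v = pw z j" using less.hyps by blast
      then show ?thesis using u by (intro exI[of _ z] exI[of _ "j+i"] exI[of _ j]) (simp add: pw_add)
    qed
  qed
qed




lemma pref_le: "(xs @ ys :: nat list) \<le> xs @ zs \<Longrightarrow> ys \<le> zs"
  by (induction xs) auto

lemma app_less: "length a = length b \<Longrightarrow> (a::nat list) < b \<Longrightarrow> a @ c < b @ d"
proof (induction a arbitrary: b)
  case Nil thus ?case by simp
next
  case (Cons x a)
  then obtain y b' where b: "b = y # b'" by (cases b) auto
  show ?case using Cons.prems Cons.IH[of b'] unfolding b by auto
qed

theorem mainTheorem1:
  fixes V :: "'a set" and E :: "'a \<Rightarrow> 'a \<Rightarrow> bool"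
  assumes "\<forall>x y. E x y \<longrightarrow> x \<in> V \<and> y \<in> V"
    and "\<forall>x y. E x y \<longleftrightarrow> E y x"
    and "\<forall>x. \<not> E x x"
    and "word_representable V E"
  shows "\<exists>w. represents w V E \<and> \<not> bordered w"
proof -
  obtain w0 where "represents w0 V E" using assms(4) unfolding word_representable_def by blast
  then obtain w1 where w1: "represents w1 V E \<and> uniform w1" using uniformize by blast
  obtain w where w: "represents w V E \<and> uniform w"
    and wmin: "\<forall>y. represents y V E \<and> uniform y \<longrightarrow> length w \<le> length y"
    using ex_has_least_nat[of "\<lambda>w. represents w V E \<and> uniform w" w1 length] w1 by blast
  show ?thesis
  proof (cases "w = []")
    case True
    then show ?thesis using w unfolding bordered_def by auto
  next
    case False
    obtain f :: "'a \<Rightarrow> nat" and n where f: "inj_on f (set w)"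
      using finite_imp_inj_to_nat_seg[of "set w"] by auto
    define M where "M = (\<lambda>k. map f (rotate k w)) ` {..<length w}"
    have "finite M" "M \<noteq> {}" unfolding M_def using False by auto
    then have "Min M \<in> M" by simp
    then obtain k where k: "map f (rotate k w) = Min M" unfolding M_def by auto
    define r where "r = rotate k w"
    have rmin: "map f r \<le> map f (rotate j r)" for j
    proof -
      have "rotate j r = rotate ((j + k) mod length w) w"
        unfolding r_def rotate_rotate by (rule rotate_conv_mod)
      moreover have "(j + k) mod length w < length w" using False by simp
      ultimately have "map f (rotate j r) \<in> M" unfolding M_def by auto
      then show ?thesis using k \<open>finite M\<close> unfolding r_def by simp
    qed
    have rr: "uniform r \<and> represents r V E" unfolding r_def using rotn w by blast
    have lr: "length r = length w" unfolding r_def by simp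
    have sr: "set r = set w" unfolding r_def by simp
    have "\<not> bordered r"
    proof
      assume "bordered r"
      then obtain u v where uv: "u \<noteq> []" "r = u @ v @ u" unfolding bordered_def by blast
      have r1: "rotate (length u) r = v @ u @ u" using uv(2) rotate_append[of u "v @ u"] by simp
      have r2: "rotate (length (u @ v)) r = u @ u @ v" using uv(2) rotate_append[of "u @ v" u] by simp
      define U where "U = map f u"
      define W where "W = map f v"
      have c1: "U @ W @ U \<le> U @ U @ W" using rmin[of "length (u@v)"] r2 uv(2) unfolding U_def W_def by simp
      have c2: "U @ W @ U \<le> W @ U @ U" using rmin[of "length u"] r1 uv(2) unfolding U_def W_def by simp
      have d1: "W @ U \<le> U @ W" using pref_le[of U "W @ U" "U @ W"] c1 by simp
      have d2: "\<not> W @ U < U @ W"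
      proof
        assume "W @ U < U @ W"
        then have "(W @ U) @ U < (U @ W) @ U" using app_less[of "W @ U" "U @ W" U U] by simp
        then show False using c2 by simp
      qed
      have "W @ U = U @ W" using d1 d2 by (simp add: order.order_iff_strict)
      then have "map f (v @ u) = map f (u @ v)" unfolding U_def W_def by simp
      moreover have "inj_on f (set (v @ u) \<union> set (u @ v))" using f sr uv(2) by (auto intro: inj_on_subset)
      ultimately have "v @ u = u @ v" using inj_on_map_eq_map by blast
      then obtain z i j where zij: "u = pw z i" "v = pw z j" using root by metis
      have i1: "i \<ge> 1" using uv(1) zij(1) by (cases i) (auto simp: pw_def)
      have zne: "z \<noteq> []" using uv(1) zij(1) by (auto simp: pw_def)
      have rz: "r = pw z (i + j + i)" using uv(2) zij by (simp add: pw_add)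
      have "uniform z \<and> represents z V E" using pw_rep[of "i+j+i" z V E] rr rz i1 by simp
      then have "length w \<le> length z" using wmin by blast
      moreover have "length r = (i + j + i) * length z" using rz pw_len by metis
      moreover have "length z > 0" using zne by simp
      moreover have "2 * length z \<le> (i + j + i) * length z" by (rule mult_le_mono1) (use i1 in simp)
      ultimately show False using lr by linarith
    qed
    then show ?thesis using rr by blast
  qed
qed


end
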